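(* For every PTM $M$, the probabilistic function $CF_M:\mathbb{N}\to\mathcal D(\mathbb{N})$ defined by $CF_M(x)(y)=PT_M(x,y)=2^{-|\overline y|}$ if $y$ is a leaf of $CT_M(x)$ and $CF_M(x)(y)=0$ otherwise, satisfies $CF_M=\mu(PTC_M)$; in particular $CF_M\in\mathscr{PR}$.
   Context: PTM: Turing machine with two transition functions $\delta_0,\delta_1$ (each applied with probability $1/2$) defined on non-final configurations; initial configuration on input string $w=a\cdot v$ is $\langle\varepsilon,a,v,q_s\rangle$; final configurations are $\langle s,a,\varepsilon,q\rangle$ with $q$ final. $n\mapsto\overline n$ is the length-lexicographic bijection $\mathbb{N}\to\{0,1\}^*$ ($\overline0=\varepsilon,\overline1=0,\overline2=1,\overline3=00,\dots$). Computation tree $CT_M(x)$: nodes are binary strings, root $\varepsilon$ labelled by the initial configuration on $\overline x$, a node $b$ labelled by a non-final $C$ has children $b0,b1$ labelled $\delta_0(C),\delta_1(C)$, nodes labelled by final configurations have no children; $y\in\mathbb{N}$ denotes node $\overline y$, a leaf if it is in the tree with final label. $PT_M(x,y)=2^{-|\overline y|}$. Recursively in $y$: if $y$ is not a leaf, $PT^1_M(x,y)=1$, $PT^0_M(x,y)=0$; otherwise $PT^0_M(x,y)=PT_M(x,y)/\prod_{k<y}PT^1_M(x,k)$ and $PT^1_M(x,y)=1-PT^0_M(x,y)$. $PTC_M(x,y)(0)=PT^0_M(x,y)$, $PTC_M(x,y)(1)=PT^1_M(x,y)$, $PTC_M(x,y)(z)=0$ for $z\ge2$. Minimization: $\mu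 f(\vec x)(y)=f(\vec x,y)(0)\prod_{z<y}\sum_{k>0}f(\vec x,z)(k)$. $\mathcal D(X)$: functions $X\to[0,1]$ with sum $\le1$. $\mathscr{PR}$ is the smallest class of functions $\mathbb{N}^k\to\mathcal D(\mathbb{N})$ containing $z(n)(0)=1$, $s(n)(n+1)=1$, $\Pi^n_m(\vec k)(k_m)=1$, $r(x)(x)=r(x)(x+1)=1/2$ (other values $0$) and closed under generalized composition $(f\odot(g_1,\dots,g_n))(\vec x)(y)=\sum_{\vec z} f(\vec z)(y)\prod_i g_i(\vec x)(z_i)$, primitive recursion ($h(\vec x,0)=f(\vec x)$, $h(\vec x,y+1)(w)=\sum_z h(\vec x,y)(z)g(\vec x,y,z)(w)$) and minimization. *)

theory Defs
  imports "HOL-Analysis.Analysis"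
begin

text \<open>Bits: False = 0, True = 1. bin 0 = [], bin 1 = [0], bin 2 = [1], bin 3 = [0,0], ...\<close>
fun bin :: "nat \<Rightarrow> bool list" where
  "bin 0 = []"
| "bin (Suc n) = bin (n div 2) @ [odd n]"

datatype move = MoveL | MoveR | Stay

record ('q, 's) ptm =
  blank  :: 's
  bitsym :: "bool \<Rightarrow> 's"
  start  :: 'q
  finals :: "'q set"
  delta0 :: "'q \<Rightarrow> 's \<Rightarrow> 'q \<times> 's \<times> move"
  delta1 :: "'q \<Rightarrow> 's \<Rightarrow> 'q \<times> 's \<times> move"

definition is_ptm :: "('q, 's) ptm \<Rightarrow> bool" where
  "is_ptm M \<longleftrightarrow> inj (bitsym M) \<and> blank M \<notin> range (bitsym M)"

text \<open>Configuration <s, a, v, q>: tape left of the head (left to right), scanned symbol,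
  tape right of the head, state.\<close>
type_synonym ('q, 's) conf = "'s list \<times> 's \<times> 's list \<times> 'q"

definition init_conf :: "('q, 's) ptm \<Rightarrow> bool list \<Rightarrow> ('q, 's) conf" where
  "init_conf M w = (case w of
      [] \<Rightarrow> ([], blank M, [], start M)
    | a # v \<Rightarrow> ([], bitsym M a, map (bitsym M) v, start M))"

definition final_conf :: "('q, 's) ptm \<Rightarrow> ('q, 's) conf \<Rightarrow> bool" where
  "final_conf M C = (case C of (s, a, v, q) \<Rightarrow> v = [] \<and> q \<in> finals M)"

definition apply_tr :: "('q, 's) ptm \<Rightarrow> ('q \<times> 's \<times> move) \<Rightarrow> ('q, 's) conf \<Rightarrow> ('q, 's) conf" where
  "apply_tr M t C = (case C of (s, a, v, q) \<Rightarrow> (case t of (q', b, m) \<Rightarrow>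
     (case m of
        Stay \<Rightarrow> (s, b, v, q')
      | MoveR \<Rightarrow> (s @ [b], (case v of [] \<Rightarrow> blank M | c # _ \<Rightarrow> c), tl v, q')
      | MoveL \<Rightarrow> (if s = [] then ([], blank M, b # v, q') else (butlast s, last s, b # v, q')))))"

definition step :: "('q, 's) ptm \<Rightarrow> bool \<Rightarrow> ('q, 's) conf \<Rightarrow> ('q, 's) conf" where
  "step M i C = (case C of (s, a, v, q) \<Rightarrow>
     apply_tr M (if i then delta1 M q a else delta0 M q a) C)"

text \<open>Label of node bs in CT_M(x); None if bs is not a node of the tree.\<close>
definition label :: "('q, 's) ptm \<Rightarrow> nat \<Rightarrow> bool list \<Rightarrow> ('q, 's) conf option" where
  "label M x bs = foldl (\<lambda>oc i. case oc of None \<Rightarrow> None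
        | Some C \<Rightarrow> if final_conf M C then None else Some (step M i C))
     (Some (init_conf M (bin x))) bs"

definition leaf :: "('q, 's) ptm \<Rightarrow> nat \<Rightarrow> nat \<Rightarrow> bool" where
  "leaf M x y \<longleftrightarrow> (\<exists>C. label M x (bin y) = Some C \<and> final_conf M C)"

definition PT :: "nat \<Rightarrow> real" where
  "PT y = 2 powi (- int (length (bin y)))"

text \<open>PTprod M x y = prod_{k<y} PT^1_M(x,k), computed together with PT^0, PT^1.\<close>
fun PTprod :: "('q, 's) ptm \<Rightarrow> nat \<Rightarrow> nat \<Rightarrow> real" where
  "PTprod M x 0 = 1"
| "PTprod M x (Suc y) = PTprod M x y *
     (if leaf M x y then 1 - PT y / PTprod M x y else 1)"

definition PT0 :: "('q, 's) ptm \<Rightarrow> nat \<Rightarrow> nat \<Rightarrow> real" where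
  "PT0 M x y = (if leaf M x y then PT y / PTprod M x y else 0)"

definition PT1 :: "('q, 's) ptm \<Rightarrow> nat \<Rightarrow> nat \<Rightarrow> real" where
  "PT1 M x y = (if leaf M x y then 1 - PT0 M x y else 1)"

lemma PTprod_eq: "PTprod M x y = (\<Prod>k<y. PT1 M x k)"
  by (induction y) (simp_all add: PT1_def PT0_def)

definition PTC :: "('q, 's) ptm \<Rightarrow> nat \<Rightarrow> nat \<Rightarrow> nat \<Rightarrow> real" where
  "PTC M x y z = (if z = 0 then PT0 M x y else if z = 1 then PT1 M x y else 0)"

definition CF :: "('q, 's) ptm \<Rightarrow> nat \<Rightarrow> nat \<Rightarrow> real" where
  "CF M x y = (if leaf M x y then PT y else 0)"

text \<open>A k-ary function N^k -> D(N) is represented as nat list => nat => real; only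
  arguments of length k are meaningful.\<close>

definition comp_pf :: "(nat list \<Rightarrow> nat \<Rightarrow> real) \<Rightarrow> (nat list \<Rightarrow> nat \<Rightarrow> real) list
    \<Rightarrow> nat list \<Rightarrow> nat \<Rightarrow> real" where
  "comp_pf f gs xs y = (\<Sum>\<^sub>\<infinity>zs\<in>{zs. length zs = length gs}.
      f zs y * (\<Prod>i<length gs. (gs ! i) xs (zs ! i)))"

fun prec_aux :: "(nat list \<Rightarrow> nat \<Rightarrow> real) \<Rightarrow> (nat list \<Rightarrow> nat \<Rightarrow> real)
    \<Rightarrow> nat list \<Rightarrow> nat \<Rightarrow> nat \<Rightarrow> real" where
  "prec_aux f g xs 0 = f xs"
| "prec_aux f g xs (Suc y) = (\<lambda>w. \<Sum>\<^sub>\<infinity>z\<in>UNIV. prec_aux f g xs y z * g (xs @ [y, z]) w)"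

definition prec_pf :: "(nat list \<Rightarrow> nat \<Rightarrow> real) \<Rightarrow> (nat list \<Rightarrow> nat \<Rightarrow> real)
    \<Rightarrow> nat list \<Rightarrow> nat \<Rightarrow> real" where
  "prec_pf f g xs = prec_aux f g (butlast xs) (last xs)"

definition mu_pf :: "(nat list \<Rightarrow> nat \<Rightarrow> real) \<Rightarrow> nat list \<Rightarrow> nat \<Rightarrow> real" where
  "mu_pf f xs y = f (xs @ [y]) 0 * (\<Prod>z<y. \<Sum>\<^sub>\<infinity>k\<in>{0<..}. f (xs @ [z]) k)"

inductive PR :: "nat \<Rightarrow> (nat list \<Rightarrow> nat \<Rightarrow> real) \<Rightarrow> bool" where
  zero: "PR 1 (\<lambda>xs y. if y = 0 then 1 else 0)"
| succ: "PR 1 (\<lambda>xs y. if y = hd xs + 1 then 1 else 0)"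
| proj: "1 \<le> m \<Longrightarrow> m \<le> n \<Longrightarrow> PR n (\<lambda>xs y. if y = xs ! (m - 1) then 1 else 0)"
| rand: "PR 1 (\<lambda>xs y. if y = hd xs \<or> y = hd xs + 1 then 1 / 2 else 0)"
| comp: "PR (length gs) f \<Longrightarrow> (\<forall>g\<in>set gs. PR k g) \<Longrightarrow> PR k (comp_pf f gs)"
| prim: "PR k f \<Longrightarrow> PR (k + 2) g \<Longrightarrow> PR (k + 1) (prec_pf f g)"
| mini: "PR (k + 1) f \<Longrightarrow> PR k (mu_pf f)"
| ext:  "PR k f \<Longrightarrow> (\<forall>xs. length xs = k \<longrightarrow> g xs = f xs) \<Longrightarrow> PR k g"

end

theory Submission
  imports Defs
begin


definition dm :: "nat \<Rightarrow> nat \<Rightarrow> real" where "dm a y = (if y = a then 1 else 0)"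

definition det :: "nat \<Rightarrow> (nat list \<Rightarrow> nat) \<Rightarrow> bool" where
  "det k f \<longleftrightarrow> PR k (\<lambda>xs. dm (f xs))"

lemma infsum_point:
  fixes f :: "'a \<Rightarrow> real"
  assumes "a \<in> A" "\<And>x. x \<in> A \<Longrightarrow> x \<noteq> a \<Longrightarrow> f x = 0"
  shows "infsum f A = f a"
proof -
  have "infsum f A = infsum f {a}"
    by (rule infsum_cong_neutral) (use assms in auto)
  then show ?thesis by simp
qed

lemma det_ext: "det k f \<Longrightarrow> (\<And>xs. length xs = k \<Longrightarrow> g xs = f xs) \<Longrightarrow> det k g"
  unfolding det_def by (erule PR.ext) auto

lemma det_zero1: "det 1 (\<lambda>xs. 0)"
  unfolding det_def dm_def using PR.zero by (simp add: eq_commute)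

lemma det_succ1: "det 1 (\<lambda>xs. Suc (hd xs))"
  unfolding det_def dm_def using PR.succ by simp

lemma det_proj: "i < n \<Longrightarrow> det n (\<lambda>xs. xs ! i)"
  unfolding det_def dm_def using PR.proj[of "Suc i" n] by simp

lemma prod_dm:
  assumes "length zs = length gs"
  shows "(\<Prod>i<length gs. dm ((gs ! i) xs) (zs ! i)) = (if zs = map (\<lambda>g. g xs) gs then 1 else 0)"
proof (cases "zs = map (\<lambda>g. g xs) gs")
  case True then show ?thesis by (simp add: dm_def)
next
  case False
  have "\<exists>i<length gs. zs ! i \<noteq> (gs ! i) xs"
  proof (rule ccontr)
    assume "\<not> (\<exists>i<length gs. zs ! i \<noteq> (gs ! i) xs)"
    then have "zs = map (\<lambda>g. g xs) gs" using assms by (intro nth_equalityI) auto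
    with False show False by simp
  qed
  then obtain i where i: "i < length gs" "zs ! i \<noteq> (gs ! i) xs" by blast
  then have "dm ((gs ! i) xs) (zs ! i) = 0" by (simp add: dm_def)
  then have "(\<Prod>i<length gs. dm ((gs ! i) xs) (zs ! i)) = 0"
    using i by (intro prod_zero) auto
  then show ?thesis using False by simp
qed

lemma det_comp:
  assumes "det (length gs) f" "\<forall>g\<in>set gs. det k g"
  shows "det k (\<lambda>xs. f (map (\<lambda>g. g xs) gs))"
proof -
  have "PR k (comp_pf (\<lambda>xs. dm (f xs)) (map (\<lambda>g xs. dm (g xs)) gs))"
    using assms unfolding det_def by (intro PR.comp) auto
  moreover have eq: "comp_pf (\<lambda>xs. dm (f xs)) (map (\<lambda>g xs. dm (g xs)) gs) xs = dm (f (map (\<lambda>g. g xs) gs))" for xs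
  proof
    fix y
    have "comp_pf (\<lambda>xs. dm (f xs)) (map (\<lambda>g xs. dm (g xs)) gs) xs y
       = (\<Sum>\<^sub>\<infinity>zs\<in>{zs. length zs = length gs}. dm (f zs) y * (\<Prod>i<length gs. dm ((gs ! i) xs) (zs ! i)))"
      unfolding comp_pf_def by simp
    also have "\<dots> = (\<Sum>\<^sub>\<infinity>zs\<in>{zs. length zs = length gs}. dm (f zs) y * (if zs = map (\<lambda>g. g xs) gs then 1 else 0))"
      by (rule infsum_cong) (simp add: prod_dm)
    also have "\<dots> = dm (f (map (\<lambda>g. g xs) gs)) y"
      by (subst infsum_point[where a="map (\<lambda>g. g xs) gs"]) auto
    finally show "comp_pf (\<lambda>xs. dm (f xs)) (map (\<lambda>g xs. dm (g xs)) gs) xs y = dm (f (map (\<lambda>g. g xs) gs)) y" .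
  qed
  ultimately show ?thesis unfolding det_def
    by (simp add: eq[abs_def])
qed

fun prrec :: "nat \<Rightarrow> (nat \<Rightarrow> nat \<Rightarrow> nat) \<Rightarrow> nat \<Rightarrow> nat" where
  "prrec a s 0 = a"
| "prrec a s (Suc n) = s n (prrec a s n)"

lemma prec_aux_dm:
  "prec_aux (\<lambda>xs. dm (f xs)) (\<lambda>xs. dm (g xs)) xs n = dm (prrec (f xs) (\<lambda>i r. g (xs @ [i, r])) n)"
proof (induction n)
  case 0 then show ?case by simp
next
  case (Suc n)
  show ?case
  proof
    fix w
    show "prec_aux (\<lambda>xs. dm (f xs)) (\<lambda>xs. dm (g xs)) xs (Suc n) w = dm (prrec (f xs) (\<lambda>i r. g (xs @ [i, r])) (Suc n)) w"
      apply (simp add: Suc)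
      apply (subst infsum_point[where a="prrec (f xs) (\<lambda>i r. g (xs @ [i, r])) n"])
      by (auto simp: dm_def)
  qed
qed

lemma det_prim:
  assumes "det k f" "det (Suc (Suc k)) g"
  shows "det (Suc k) (\<lambda>xs. prrec (f (butlast xs)) (\<lambda>i r. g (butlast xs @ [i, r])) (last xs))"
proof -
  have "PR (k+1) (prec_pf (\<lambda>xs. dm (f xs)) (\<lambda>xs. dm (g xs)))"
    using assms unfolding det_def by (intro PR.prim) auto
  moreover have "prec_pf (\<lambda>xs. dm (f xs)) (\<lambda>xs. dm (g xs)) = (\<lambda>xs. dm (prrec (f (butlast xs)) (\<lambda>i r. g (butlast xs @ [i, r])) (last xs)))"
    by (rule HOL.ext) (simp only: prec_pf_def prec_aux_dm)
  ultimately show ?thesis unfolding det_def by simp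
qed


lemma det_weaken:
  assumes "det k f" "k \<le> m"
  shows "det m (\<lambda>ys. f (take k ys))"
proof -
  have "det m (\<lambda>ys. f (map (\<lambda>g. g ys) (map (\<lambda>i ys. ys ! i) [0..<k])))"
    by (rule det_comp) (use assms det_proj in auto)
  then show ?thesis
    by (rule det_ext) (use assms in \<open>auto intro!: nth_equalityI arg_cong[where f=f]\<close>)
qed

lemma det_suc: "det k f \<Longrightarrow> det k (\<lambda>xs. Suc (f xs))"
  using det_comp[of "[f]" "\<lambda>xs. Suc (hd xs)" k] det_succ1 by simp

lemma det_const0: "0 < k \<Longrightarrow> det k (\<lambda>xs. 0)"
  using det_comp[of "[\<lambda>xs. xs ! 0]" "\<lambda>xs. 0" k] det_zero1 det_proj[of 0 k] by simp

lemma det_const: "0 < k \<Longrightarrow> det k (\<lambda>xs. c)"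
  by (induction c) (auto intro: det_const0 det_suc)

lemma det_iter:
  assumes "det k a" "det (Suc (Suc k)) s" "det k n"
  shows "det k (\<lambda>xs. prrec (a xs) (\<lambda>i r. s (xs @ [i, r])) (n xs))"
proof -
  have h: "det (Suc k) (\<lambda>ys. prrec (a (butlast ys)) (\<lambda>i r. s (butlast ys @ [i, r])) (last ys))"
    by (rule det_prim) (use assms in auto)
  have "det k (\<lambda>xs. (\<lambda>ys. prrec (a (butlast ys)) (\<lambda>i r. s (butlast ys @ [i, r])) (last ys))
                 (map (\<lambda>g. g xs) (map (\<lambda>i ys. ys ! i) [0..<k] @ [n])))"
    by (rule det_comp) (use h assms det_proj in auto)
  then show ?thesis
  proof (rule det_ext)
    fix xs :: "nat list" assume l: "length xs = k"
    have "map (\<lambda>g. g xs) (map (\<lambda>i ys. ys ! i) [0..<k] @ [n]) = xs @ [n xs]"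
      using l by (auto intro!: nth_equalityI simp: nth_append)
    then show "prrec (a xs) (\<lambda>i r. s (xs @ [i, r])) (n xs) =
      (\<lambda>ys. prrec (a (butlast ys)) (\<lambda>i r. s (butlast ys @ [i, r])) (last ys))
                 (map (\<lambda>g. g xs) (map (\<lambda>i ys. ys ! i) [0..<k] @ [n]))" by simp
  qed
qed

lemma det_iter':
  assumes "det k a" "det (Suc (Suc k)) (\<lambda>ys. S (take k ys) (ys ! k) (ys ! Suc k))" "det k n"
  shows "det k (\<lambda>xs. prrec (a xs) (S xs) (n xs))"
  using det_iter[OF assms] by (rule det_ext) (auto simp: nth_append)

lemma prrec_add: "prrec a (\<lambda>i r. Suc r) n = a + n" by (induction n) auto
lemma prrec_mult: "prrec 0 (\<lambda>i r. r + f) n = n * f" by (induction n) auto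
lemma prrec_pred: "prrec 0 (\<lambda>i r. i) n = n - 1" by (induction n) auto
lemma prrec_sub: "prrec a (\<lambda>i r. r - Suc 0) n = a - n" by (induction n) auto
lemma prrec_pow: "prrec (Suc 0) (\<lambda>i r. r * f) n = f ^ n" by (induction n) auto
lemma prrec_mod: "prrec 0 (\<lambda>i r. if Suc r = m then 0 else Suc r) n = n mod m"
  by (induction n) (auto simp: mod_Suc)
lemma prrec_sum: "prrec 0 (\<lambda>i r. r + f i) n = (\<Sum>i<n. f i)" by (induction n) auto

lemma Suc_div_eq: "Suc i div m = (if Suc (i mod m) = m then Suc (i div m) else i div m)"
proof (cases "m = 0")
  case True then show ?thesis by simp
next
  case False
  then show ?thesis by (simp add: div_Suc mod_Suc)
qed

lemma prrec_div: "prrec 0 (\<lambda>i r. if Suc (i mod m) = m then Suc r else r) n = n div m"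
  by (induction n) (auto simp: Suc_div_eq)

lemma det_add: assumes "det k f" "det k g" shows "det k (\<lambda>xs. f xs + g xs)"
proof -
  have "det k (\<lambda>xs. prrec (f xs) (\<lambda>i r. Suc r) (g xs))"
    by (rule det_iter'[where S="\<lambda>xs i r. Suc r"]) (use assms in \<open>auto intro: det_suc det_proj\<close>)
  then show ?thesis by (simp add: prrec_add)
qed

lemma det_mult: assumes "det k f" "det k g" "0 < k" shows "det k (\<lambda>xs. f xs * g xs)"
proof -
  have "det k (\<lambda>xs. prrec 0 (\<lambda>i r. r + f xs) (g xs))"
    by (rule det_iter'[where S="\<lambda>xs i r. r + f xs"])
       (use assms in \<open>auto intro!: det_add det_proj det_const det_weaken[where k=k]\<close>)
  then show ?thesis by (simp add: prrec_mult mult.commute)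
qed

lemma det_pred: assumes "det k f" "0 < k" shows "det k (\<lambda>xs. f xs - 1)"
proof -
  have "det k (\<lambda>xs. prrec 0 (\<lambda>i r. i) (f xs))"
    by (rule det_iter'[where S="\<lambda>xs i r. i"]) (use assms in \<open>auto intro!: det_proj det_const\<close>)
  then show ?thesis by (simp add: prrec_pred)
qed

lemma det_pred': assumes "det k f" "0 < k" shows "det k (\<lambda>xs. f xs - Suc 0)"
  using det_pred[OF assms] by simp

lemma det_sub: assumes "det k f" "det k g" shows "det k (\<lambda>xs. f xs - g xs)"
proof -
  have "det k (\<lambda>xs. prrec (f xs) (\<lambda>i r. r - 1) (g xs))"
    by (rule det_iter'[where S="\<lambda>xs i r. r - 1"]) (use assms in \<open>auto intro!: det_proj det_pred'\<close>)
  then show ?thesis by (simp add: prrec_sub)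
qed

lemma det_pow: assumes "det k f" "det k g" "0 < k" shows "det k (\<lambda>xs. f xs ^ g xs)"
proof -
  have "det k (\<lambda>xs. prrec 1 (\<lambda>i r. r * f xs) (g xs))"
    by (rule det_iter'[where S="\<lambda>xs i r. r * f xs"])
       (use assms in \<open>auto intro!: det_mult det_proj det_const det_weaken[where k=k]\<close>)
  then show ?thesis by (simp add: prrec_pow)
qed

lemma det_if0:
  assumes "det k c" "det k a" "det k b" "0 < k"
  shows "det k (\<lambda>xs. if c xs = 0 then a xs else b xs)"
proof -
  have "det k (\<lambda>xs. a xs * (1 - c xs) + b xs * (1 - (1 - c xs)))"
    using assms by (intro det_add det_mult det_sub det_const) auto
  then show ?thesis by (rule det_ext) auto
qed

definition detP :: "nat \<Rightarrow> (nat list \<Rightarrow> bool) \<Rightarrow> bool" where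
  "detP k P \<longleftrightarrow> det k (\<lambda>xs. if P xs then 1 else 0)"

lemma det_if:
  assumes "detP k P" "det k a" "det k b" "0 < k"
  shows "det k (\<lambda>xs. if P xs then a xs else b xs)"
proof -
  have "det k (\<lambda>xs. if (if P xs then 1 else 0) = (0::nat) then b xs else a xs)"
    using assms unfolding detP_def by (intro det_if0) auto
  then show ?thesis by (rule det_ext) auto
qed

lemma detP_eq: assumes "det k f" "det k g" "0 < k" shows "detP k (\<lambda>xs. f xs = g xs)"
proof -
  have "det k (\<lambda>xs. 1 - ((f xs - g xs) + (g xs - f xs)))"
    using assms by (intro det_add det_sub det_const) auto
  then show ?thesis unfolding detP_def by (rule det_ext) auto
qed

lemma detP_less: assumes "det k f" "det k g" "0 < k" shows "detP k (\<lambda>xs. f xs < g xs)"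
proof -
  have "det k (\<lambda>xs. 1 - (1 - (g xs - f xs)))"
    using assms by (intro det_sub det_const) auto
  then show ?thesis unfolding detP_def by (rule det_ext) auto
qed

lemma detP_not: assumes "detP k P" "0 < k" shows "detP k (\<lambda>xs. \<not> P xs)"
proof -
  have "det k (\<lambda>xs. 1 - (if P xs then 1 else 0))"
    using assms unfolding detP_def by (intro det_sub det_const) auto
  then show ?thesis unfolding detP_def by (rule det_ext) auto
qed

lemma detP_and: assumes "detP k P" "detP k Q" "0 < k" shows "detP k (\<lambda>xs. P xs \<and> Q xs)"
proof -
  have "det k (\<lambda>xs. (if P xs then 1 else 0) * (if Q xs then 1 else 0))"
    using assms unfolding detP_def by (intro det_mult) auto
  then show ?thesis unfolding detP_def by (rule det_ext) auto
qed

lemma detP_or: assumes "detP k P" "detP k Q" "0 < k" shows "detP k (\<lambda>xs. P xs \<or> Q xs)"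
proof -
  have "detP k (\<lambda>xs. \<not> (\<not> P xs \<and> \<not> Q xs))"
    using assms by (intro detP_not detP_and) auto
  then show ?thesis by simp
qed

lemma detP_le: assumes "det k f" "det k g" "0 < k" shows "detP k (\<lambda>xs. f xs \<le> g xs)"
  using detP_not[OF detP_less[OF assms(2,1,3)] assms(3)] by (simp add: not_less)

lemma det_mod: assumes "det k n" "det k m" "0 < k" shows "det k (\<lambda>xs. n xs mod m xs)"
proof -
  have "det k (\<lambda>xs. prrec 0 (\<lambda>i r. if Suc r = m xs then 0 else Suc r) (n xs))"
    by (rule det_iter'[where S="\<lambda>xs i r. if Suc r = m xs then 0 else Suc r"])
       (use assms in \<open>auto intro!: det_if detP_eq det_suc det_proj det_const det_weaken[where k=k]\<close>)
  then show ?thesis by (simp add: prrec_mod)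
qed

lemma det_div: assumes "det k n" "det k m" "0 < k" shows "det k (\<lambda>xs. n xs div m xs)"
proof -
  have "det k (\<lambda>xs. prrec 0 (\<lambda>i r. if Suc (i mod m xs) = m xs then Suc r else r) (n xs))"
    by (rule det_iter'[where S="\<lambda>xs i r. if Suc (i mod m xs) = m xs then Suc r else r"])
       (use assms in \<open>auto intro!: det_if detP_eq det_suc det_mod det_proj det_const det_weaken[where k=k]\<close>)
  then show ?thesis by (simp add: prrec_div)
qed

lemma det_sum:
  assumes "det (Suc k) f" "det k n" "0 < k"
  shows "det k (\<lambda>xs. \<Sum>i<n xs. f (xs @ [i]))"
proof -
  have "det k (\<lambda>xs. prrec 0 (\<lambda>i r. r + f (xs @ [i])) (n xs))"
  proof (rule det_iter'[where S="\<lambda>xs i r. r + f (xs @ [i])"])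
    show "det k (\<lambda>xs. 0)" using assms det_const0 by auto
    show "det (Suc (Suc k)) (\<lambda>ys. ys ! Suc k + f (take k ys @ [ys ! k]))"
    proof -
      have "det (Suc (Suc k)) (\<lambda>ys. ys ! Suc k + f (take (Suc k) ys))"
        using assms by (intro det_add det_proj det_weaken) auto
      then show ?thesis by (rule det_ext) (simp add: take_Suc_conv_app_nth)
    qed
  qed (use assms in auto)
  then show ?thesis by (simp add: prrec_sum)
qed


lemma det_table1:
  assumes "det k f" "0 < k"
  shows "det k (\<lambda>xs. if f xs < n then T (f xs) else 0)"
proof (induction n)
  case 0 then show ?case using assms by (simp add: det_const0)
next
  case (Suc n)
  have "det k (\<lambda>xs. (if f xs < n then T (f xs) else 0) + (if f xs = n then T n else 0))"
    using assms by (intro det_add[OF Suc] det_if detP_eq det_const) auto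
  then show ?case by (rule det_ext) auto
qed

lemma det_table2:
  assumes "det k f" "det k g" "0 < k"
  shows "det k (\<lambda>xs. if f xs < n \<and> g xs < m then T (f xs) (g xs) else 0)"
proof (induction n)
  case 0 then show ?case using assms by (simp add: det_const0)
next
  case (Suc n)
  have "det k (\<lambda>xs. (if f xs < n \<and> g xs < m then T (f xs) (g xs) else 0) +
          (if f xs = n then (if g xs < m then T n (g xs) else 0) else 0))"
    using assms by (intro det_add[OF Suc] det_if[OF _ det_table1] detP_eq det_const) auto
  then show ?case by (rule det_ext) auto
qed

fun mcode :: "move \<Rightarrow> nat" where
  "mcode Stay = 0" | "mcode MoveR = 1" | "mcode MoveL = 2"

locale enc =
  fixes M :: "('q, 's) ptm" and cq :: "'q \<Rightarrow> nat" and cs :: "'s \<Rightarrow> nat" and Q B :: nat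
  assumes inj_cq: "inj cq" and cq_lt: "\<And>q. cq q < Q"
    and inj_cs: "inj cs" and cs_pos: "\<And>a. 0 < cs a" and cs_lt: "\<And>a. cs a < B"
begin

lemma Q_pos: "0 < Q" using cq_lt[of undefined] by simp
lemma B_gt1: "1 < B" using cs_lt[of undefined] cs_pos[of undefined] by simp

definition enc_l :: "'s list \<Rightarrow> nat" where
  "enc_l s = foldl (\<lambda>n c. n * B + cs c) 0 s"

fun enc_r :: "'s list \<Rightarrow> nat" where
  "enc_r [] = 0" | "enc_r (c # v) = cs c + B * enc_r v"

definition encC :: "nat \<Rightarrow> ('q, 's) conf \<Rightarrow> nat" where
  "encC W C = (case C of (s, a, v, q) \<Rightarrow> cq q + Q * (cs a + B * (enc_l s + W * enc_r v)))"

definition encO :: "nat \<Rightarrow> ('q, 's) conf option \<Rightarrow> nat" where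
  "encO W oc = (case oc of None \<Rightarrow> 1 | Some C \<Rightarrow> 2 * encC W C)"

lemma enc_l_snoc: "enc_l (s @ [c]) = enc_l s * B + cs c"
  by (simp add: enc_l_def)

lemma enc_l_Nil[simp]: "enc_l [] = 0" by (simp add: enc_l_def)

lemma enc_l_zero: "enc_l s = 0 \<longleftrightarrow> s = []"
proof (cases s rule: rev_cases)
  case (snoc ys y) then show ?thesis using cs_pos[of y] by (simp add: enc_l_snoc)
qed simp

lemma enc_l_lt: "enc_l s < B ^ length s"
proof (induction s rule: rev_induct)
  case (snoc x xs)
  have "enc_l xs * B + cs x < (enc_l xs + 1) * B" using cs_lt[of x] by simp
  also have "\<dots> \<le> B ^ length xs * B" using snoc by (intro mult_right_mono) auto
  finally show ?case by (simp add: enc_l_snoc mult.commute)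
qed simp

lemma cs_ne0[simp]: "cs a \<noteq> 0" using cs_pos[of a] by simp

lemma enc_r_zero: "enc_r v = 0 \<longleftrightarrow> v = []"
  by (cases v) auto

definition dq :: "nat \<Rightarrow> nat" where "dq n = (n div 2) mod Q"
definition da :: "nat \<Rightarrow> nat" where "da n = (n div 2 div Q) mod B"
definition dl :: "nat \<Rightarrow> nat \<Rightarrow> nat" where "dl W n = (n div 2 div Q div B) mod W"
definition dr :: "nat \<Rightarrow> nat \<Rightarrow> nat" where "dr W n = n div 2 div Q div B div W"

lemma decode:
  assumes "qc < Q" "a' < B" "l < W"
  shows "dq (2 * (qc + Q * (a' + B * (l + W * r)))) = qc"
    "da (2 * (qc + Q * (a' + B * (l + W * r)))) = a'"
    "dl W (2 * (qc + Q * (a' + B * (l + W * r)))) = l"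
    "dr W (2 * (qc + Q * (a' + B * (l + W * r)))) = r"
    "(2 * (qc + Q * (a' + B * (l + W * r)))) mod 2 = 0"
  using assms Q_pos B_gt1 by (simp_all add: dq_def da_def dl_def dr_def)

definition TQ :: "bool \<Rightarrow> nat \<Rightarrow> nat \<Rightarrow> nat" where
  "TQ i qc ac = cq (fst ((if i then delta1 M else delta0 M) (inv cq qc) (inv cs ac)))"
definition TB :: "bool \<Rightarrow> nat \<Rightarrow> nat \<Rightarrow> nat" where
  "TB i qc ac = cs (fst (snd ((if i then delta1 M else delta0 M) (inv cq qc) (inv cs ac))))"
definition TM :: "bool \<Rightarrow> nat \<Rightarrow> nat \<Rightarrow> nat" where
  "TM i qc ac = mcode (snd (snd ((if i then delta1 M else delta0 M) (inv cq qc) (inv cs ac))))"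
definition FIN :: "nat \<Rightarrow> nat" where
  "FIN qc = (if inv cq qc \<in> finals M then 1 else 0)"

definition pk :: "nat \<Rightarrow> nat \<Rightarrow> nat \<Rightarrow> nat \<Rightarrow> nat \<Rightarrow> nat" where
  "pk W qc a' l r = 2 * (qc + Q * (a' + B * (l + W * r)))"

definition NS :: "nat \<Rightarrow> bool \<Rightarrow> nat \<Rightarrow> nat" where
  "NS W i n = (if n mod 2 = 1 then 1 else
     if dr W n = 0 \<and> FIN (dq n) = 1 then 1 else
     if TM i (dq n) (da n) = 0 then pk W (TQ i (dq n) (da n)) (TB i (dq n) (da n)) (dl W n) (dr W n)
     else if TM i (dq n) (da n) = 1 then
       pk W (TQ i (dq n) (da n)) (if dr W n = 0 then cs (blank M) else dr W n mod B)
         (dl W n * B + TB i (dq n) (da n)) (dr W n div B)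
     else if dl W n = 0 then pk W (TQ i (dq n) (da n)) (cs (blank M)) 0 (TB i (dq n) (da n) + B * dr W n)
     else pk W (TQ i (dq n) (da n)) (dl W n mod B) (dl W n div B) (TB i (dq n) (da n) + B * dr W n))"

definition Fstep :: "('q, 's) conf option \<Rightarrow> bool \<Rightarrow> ('q, 's) conf option" where
  "Fstep oc i = (case oc of None \<Rightarrow> None
        | Some C \<Rightarrow> if final_conf M C then None else Some (step M i C))"

lemma label_foldl: "label M x bs = foldl Fstep (Some (init_conf M (bin x))) bs"
  unfolding label_def Fstep_def ..

lemma encO_None[simp]: "encO W None = 1" by (simp add: encO_def)

lemma NS_one: "NS W i (Suc 0) = Suc 0"
  by (simp add: NS_def)

lemma NS_None: "NS W i (encO W None) = encO W None"
  by (simp add: NS_def encO_def)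

lemma encO_Some: "encO W (Some (s, a, v, q)) = pk W (cq q) (cs a) (enc_l s) (enc_r v)"
  by (simp add: encO_def encC_def pk_def)

lemma NS_Some:
  assumes "enc_l s < W"
  shows "NS W i (encO W (Some (s, a, v, q))) = encO W (Fstep (Some (s, a, v, q)) i)"
proof -
  note dec = decode[OF cq_lt cs_lt assms, folded pk_def]
  obtain q' b m where dl_eq: "(if i then delta1 M else delta0 M) q a = (q', b, m)"
    by (metis prod_cases3)
  have tq: "TQ i (cq q) (cs a) = cq q'" and tb: "TB i (cq q) (cs a) = cs b"
    and tm: "TM i (cq q) (cs a) = mcode m"
    using dl_eq by (simp_all add: TQ_def TB_def TM_def inv_f_f[OF inj_cq] inv_f_f[OF inj_cs])
  have fin: "FIN (cq q) = 1 \<longleftrightarrow> q \<in> finals M" by (simp add: FIN_def inv_f_f[OF inj_cq])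
  have stp: "step M i (s, a, v, q) = apply_tr M (q', b, m) (s, a, v, q)"
    using dl_eq by (cases i) (simp_all add: step_def)
  show ?thesis
  proof (cases "final_conf M (s, a, v, q)")
    case True
    then have "v = []" "q \<in> finals M" by (auto simp: final_conf_def)
    then show ?thesis using fin unfolding encO_Some NS_def dec by (simp add: Fstep_def final_conf_def)
  next
    case False
    then have nf0: "\<not> (enc_r v = 0 \<and> FIN (cq q) = 1)" using fin enc_r_zero by (auto simp: final_conf_def)
    then have nf: "(enc_r v = 0 \<and> FIN (cq q) = Suc 0) = False" by simp
    show ?thesis
    proof (cases m)
      case Stay
      then show ?thesis using False unfolding encO_Some NS_def dec
        by (simp add: Fstep_def tq tb tm stp apply_tr_def encO_Some nf)
    next
      case MoveR
      have hd: "(if enc_r v = 0 then cs (blank M) else enc_r v mod B) = cs (case v of [] \<Rightarrow> blank M | c # _ \<Rightarrow> c)"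
        by (cases v) (use cs_lt in auto)
      have tl: "enc_r v div B = enc_r (tl v)"
        by (cases v) (use cs_lt B_gt1 in auto)
      show ?thesis using False MoveR unfolding encO_Some NS_def dec
        by (simp add: Fstep_def tq tb tm stp apply_tr_def hd tl enc_l_snoc encO_Some nf del: enc_r.simps)
    next
      case MoveL
      show ?thesis
      proof (cases "s = []")
        case True
        have stp': "step M i ([], a, v, q) = apply_tr M (q', b, m) ([], a, v, q)" using stp True by simp
        show ?thesis using False MoveL unfolding encO_Some NS_def dec
          by (simp add: Fstep_def tq tb tm apply_tr_def encO_Some nf True stp')
      next
        case sne: False
        then obtain s' c where s: "s = s' @ [c]" by (metis rev_exhaust)
        have "enc_l s \<noteq> 0" using sne enc_l_zero by simp
        moreover have "enc_l s mod B = cs c" "enc_l s div B = enc_l s'"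
          using s cs_lt[of c] by (simp_all add: enc_l_snoc)
        moreover have stp': "step M i (s' @ [c], a, v, q) = apply_tr M (q', b, m) (s' @ [c], a, v, q)" using stp s by simp
        ultimately show ?thesis using False MoveL sne unfolding encO_Some NS_def dec
          by (simp add: Fstep_def tq tb tm apply_tr_def encO_Some s nf stp')
      qed
    qed
  qed
qed

end


definition bitf :: "nat \<Rightarrow> nat \<Rightarrow> bool" where
  "bitf y j = odd (Suc y div 2 ^ (length (bin y) - Suc j))"

lemma bin_Suc_len: "length (bin (Suc n)) = Suc (length (bin (n div 2)))" by simp

lemma bin_bits: "bin y = map (bitf y) [0..<length (bin y)]"
proof (induction y rule: bin.induct)
  case 1 then show ?case by simp
next
  case (2 n)
  define L where "L = length (bin (n div 2))"
  have e: "Suc (Suc n) div 2 = Suc (n div 2)" by simp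
  show ?case
  proof (rule nth_equalityI)
    show "length (bin (Suc n)) = length (map (bitf (Suc n)) [0..<length (bin (Suc n))])" by simp
  next
    fix j assume j: "j < length (bin (Suc n))"
    then have jL: "j < Suc L" by (simp add: L_def)
    show "bin (Suc n) ! j = map (bitf (Suc n)) [0..<length (bin (Suc n))] ! j"
    proof (cases "j < L")
      case True
      have "bin (Suc n) ! j = bin (n div 2) ! j" using True by (simp add: nth_append L_def)
      also have "\<dots> = map (bitf (n div 2)) [0..<L] ! j" using 2 unfolding L_def by (rule arg_cong)
      also have "\<dots> = bitf (n div 2) j" using True by simp
      also have "\<dots> = bitf (Suc n) j"
      proof -
        have p: "(2::nat) ^ (Suc L - Suc j) = 2 * 2 ^ (L - Suc j)" using True
          by (simp add: Suc_diff_Suc power_Suc[symmetric] del: power_Suc)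
        have "Suc (Suc n) div 2 ^ (Suc L - Suc j) = Suc (n div 2) div 2 ^ (L - Suc j)"
          unfolding p e[symmetric] by (simp add: div_mult2_eq)
        then show ?thesis unfolding bitf_def L_def by simp
      qed
      finally show ?thesis using j by (simp del: upt_Suc)
    next
      case False
      then have jL': "j = L" using jL by simp
      have "bin (Suc n) ! j = odd n" by (simp add: nth_append L_def jL')
      also have "\<dots> = bitf (Suc n) j" by (simp add: bitf_def L_def jL')
      finally show ?thesis using j by (simp del: upt_Suc)
    qed
  qed
qed

lemma bin_nth: "j < length (bin y) \<Longrightarrow> bin y ! j = bitf y j"
proof -
  assume j: "j < length (bin y)"
  have "bin y ! j = map (bitf y) [0..<length (bin y)] ! j" using bin_bits[of y] by (rule arg_cong)
  then show ?thesis using j by simp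
qed

lemma bin_len_bounds: "2 ^ length (bin y) \<le> Suc y \<and> Suc y < 2 ^ Suc (length (bin y))"
proof (induction y rule: bin.induct)
  case 1 then show ?case by simp
next
  case (2 n)
  have a: "2 * (n div 2) \<le> n" "n \<le> 2 * (n div 2) + 1" by auto
  show ?case using 2 a unfolding bin_Suc_len power_Suc by (intro conjI; linarith)
qed

lemma bin_len_le: "length (bin y) \<le> y"
proof -
  have "length (bin y) < 2 ^ length (bin y)" by (rule less_exp)
  then show ?thesis using bin_len_bounds[of y] by linarith
qed

lemma pow_le_iff_len: "2 ^ Suc d \<le> Suc y \<longleftrightarrow> d < length (bin y)"
proof
  assume "2 ^ Suc d \<le> Suc y"
  then have "(2::nat) ^ Suc d < 2 ^ Suc (length (bin y))" using bin_len_bounds[of y] by linarith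
  then have "Suc d < Suc (length (bin y))" by (rule power_less_imp_less_exp[rotated]) simp
  then show "d < length (bin y)" by simp
next
  assume "d < length (bin y)"
  then have "(2::nat) ^ Suc d \<le> 2 ^ length (bin y)" by (intro power_increasing) auto
  then show "2 ^ Suc d \<le> Suc y" using bin_len_bounds[of y] by simp
qed

lemma pow_le_iff_len': "2 * 2 ^ d \<le> Suc y \<longleftrightarrow> d < length (bin y)"
  using pow_le_iff_len[of d y] by simp

lemma bin_len_sum: "length (bin y) = (\<Sum>d<y. if 2 ^ Suc d \<le> Suc y then 1 else 0)"
proof -
  have "(\<Sum>d<y. if 2 ^ Suc d \<le> Suc y then 1 else (0::nat)) = card ({..<y} \<inter> {d. d < length (bin y)})"
    by (simp add: pow_le_iff_len' sum.If_cases)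
  also have "{..<y} \<inter> {d. d < length (bin y)} = {..<length (bin y)}"
    using bin_len_le[of y] by auto
  finally show ?thesis by simp
qed

lemma bin_len_mono: "k \<le> y \<Longrightarrow> length (bin k) \<le> length (bin y)"
proof -
  assume "k \<le> y"
  then have "(2::nat) ^ length (bin k) < 2 ^ Suc (length (bin y))"
    using bin_len_bounds[of k] bin_len_bounds[of y] by linarith
  then have "length (bin k) < Suc (length (bin y))" by (rule power_less_imp_less_exp[rotated]) simp
  then show ?thesis by simp
qed

lemma apply_tr_len: "length (fst (apply_tr M t C)) \<le> Suc (length (fst C))"
  by (cases C; cases t; cases "snd (snd t)") (auto simp: apply_tr_def)

lemma step_len: "length (fst (step M i C)) \<le> Suc (length (fst C))"
proof -
  have "step M i C = apply_tr M (case C of (s,a,v,q) \<Rightarrow> if i then delta1 M q a else delta0 M q a) C"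
    by (cases C) (simp add: step_def)
  then show ?thesis by (simp only: apply_tr_len)
qed

context enc
begin

lemma Fstep_len: "Fstep (Some C) i = Some C' \<Longrightarrow> length (fst C') \<le> Suc (length (fst C))"
  by (auto simp: Fstep_def split: if_splits intro: step_len)

lemma Fstep_None: "Fstep None i = None" by (simp add: Fstep_def)

lemma foldl_Fstep_None: "foldl Fstep None bs = None"
  by (induction bs) (auto simp: Fstep_None)

lemma foldl_len: "foldl Fstep (Some C0) bs = Some C \<Longrightarrow> length (fst C) \<le> length (fst C0) + length bs"
proof (induction bs arbitrary: C rule: rev_induct)
  case Nil then show ?case by simp
next
  case (snoc b bs)
  show ?case
  proof (cases "foldl Fstep (Some C0) bs")
    case None then show ?thesis using snoc.prems by (simp add: Fstep_None)
  next
    case (Some C1)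
    then have "length (fst C) \<le> Suc (length (fst C1))" using snoc.prems Fstep_len by simp
    then show ?thesis using snoc.IH[OF Some] by simp
  qed
qed

lemma enc_l_lt_pow: "length s \<le> y \<Longrightarrow> enc_l s < B ^ y"
  using enc_l_lt[of s] power_increasing[of "length s" y B] B_gt1 by linarith

lemma iter_correct:
  assumes "n \<le> y" "length (fst C0) = 0"
  shows "prrec (encO (B ^ y) (Some C0)) (\<lambda>j r. NS (B ^ y) (bitf y' j) r) n
       = encO (B ^ y) (foldl Fstep (Some C0) (map (bitf y') [0..<n]))"
  using assms(1)
proof (induction n)
  case 0 then show ?case by simp
next
  case (Suc n)
  have IH: "prrec (encO (B ^ y) (Some C0)) (\<lambda>j r. NS (B ^ y) (bitf y' j) r) n
       = encO (B ^ y) (foldl Fstep (Some C0) (map (bitf y') [0..<n]))" using Suc by simp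
  show ?case
  proof (cases "foldl Fstep (Some C0) (map (bitf y') [0..<n])")
    case None
    then show ?thesis using IH by (simp add: NS_None Fstep_None NS_one)
  next
    case (Some C)
    obtain s a v q where C: "C = (s, a, v, q)" by (metis prod_cases4)
    have "length s \<le> n" using foldl_len[OF Some] assms(2) C by simp
    then have "enc_l s < B ^ y" using Suc.prems by (intro enc_l_lt_pow) simp
    then show ?thesis using IH Some C by (simp add: NS_Some)
  qed
qed

lemma label_iter:
  "prrec (encO (B ^ y) (Some (init_conf M (bin x)))) (\<lambda>j r. NS (B ^ y) (bitf y j) r) (length (bin y))
       = encO (B ^ y) (label M x (bin y))"
proof -
  have e: "map (bitf y) [0..<length (bin y)] = bin y" by (rule bin_bits[symmetric])
  have "length (fst (init_conf M (bin x))) = 0" by (simp add: init_conf_def split: list.splits)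
  from iter_correct[OF bin_len_le[of y] this, where y'=y]
  show ?thesis unfolding label_foldl e .
qed

lemma leaf_iff:
  "leaf M x y \<longleftrightarrow> (let n = encO (B ^ y) (label M x (bin y)) in n mod 2 = 0 \<and> dr (B ^ y) n = 0 \<and> FIN (dq n) = 1)"
proof (cases "label M x (bin y)")
  case None
  then show ?thesis by (simp add: leaf_def)
next
  case (Some C)
  obtain s a v q where C: "C = (s, a, v, q)" by (metis prod_cases4)
  have "length (fst (init_conf M (bin x))) = 0" by (simp add: init_conf_def split: list.splits)
  then have "length s \<le> length (bin y)" using foldl_len Some C unfolding label_foldl by fastforce
  then have "enc_l s < B ^ y" using bin_len_le[of y] by (intro enc_l_lt_pow) simp
  note dec = decode[OF cq_lt cs_lt this, folded pk_def]
  show ?thesis using Some C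
    by (simp add: leaf_def encO_Some dec final_conf_def enc_r_zero FIN_def inv_f_f[OF inj_cq])
qed

lemma enc_r_sum: "enc_r xs = (\<Sum>j<length xs. cs (xs ! j) * B ^ j)"
proof (induction xs)
  case Nil then show ?case by simp
next
  case (Cons c xs)
  have "(\<Sum>j<length (c # xs). cs ((c # xs) ! j) * B ^ j) = (\<Sum>j<Suc (length xs). cs ((c # xs) ! j) * B ^ j)"
    by simp
  also have "\<dots> = cs c + (\<Sum>j<length xs. cs (xs ! j) * B ^ Suc j)"
    by (subst sum.lessThan_Suc_shift) simp
  also have "\<dots> = cs c + B * (\<Sum>j<length xs. cs (xs ! j) * B ^ j)"
    by (simp add: sum_distrib_left algebra_simps)
  finally show ?case using Cons by simp
qed

definition IA :: "nat \<Rightarrow> nat" where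
  "IA x = (if length (bin x) = 0 then cs (blank M) else cs (bitsym M (bitf x 0)))"
definition IR :: "nat \<Rightarrow> nat" where
  "IR x = (\<Sum>j<length (bin x) - 1. cs (bitsym M (bitf x (Suc j))) * B ^ j)"

lemma init_enc: "encO W (Some (init_conf M (bin x))) = pk W (cq (start M)) (IA x) 0 (IR x)"
proof (cases "bin x")
  case Nil
  then show ?thesis by (simp add: init_conf_def encO_Some IA_def IR_def)
next
  case (Cons a v)
  have a: "a = bitf x 0" using bin_nth[of 0 x] Cons by simp
  have v: "v ! j = bitf x (Suc j)" if "j < length v" for j
  proof -
    have "v ! j = bin x ! Suc j" using Cons by simp
    also have "\<dots> = bitf x (Suc j)" using that Cons by (intro bin_nth) simp
    finally show ?thesis .
  qed
  have "enc_r (map (bitsym M) v) = IR x"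
    unfolding enc_r_sum IR_def using Cons by (simp add: v)
  then show ?thesis using Cons a by (simp add: init_conf_def encO_Some IA_def)
qed

end


lemma det_sum':
  assumes "det (Suc k) (\<lambda>zs. G (take k zs) (zs ! k))" "det k n" "0 < k"
  shows "det k (\<lambda>xs. \<Sum>i<n xs. G xs i)"
  using det_sum[OF assms] by (rule det_ext) (simp add: nth_append)

lemma det_binlen:
  assumes "det k f" "0 < k"
  shows "det k (\<lambda>xs. length (bin (f xs)))"
proof -
  have "det k (\<lambda>xs. \<Sum>d<f xs. if 2 ^ Suc d \<le> Suc (f xs) then 1 else 0)"
    using assms by (intro det_sum' det_if detP_le det_pow det_suc det_const det_proj det_weaken[where k=k]) auto
  then show ?thesis by (rule det_ext) (simp only: bin_len_sum)
qed

lemma detP_bitf: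
  assumes "det k fy" "det k fj" "0 < k"
  shows "detP k (\<lambda>xs. bitf (fy xs) (fj xs))"
proof -
  have "detP k (\<lambda>xs. (Suc (fy xs) div 2 ^ (length (bin (fy xs)) - Suc (fj xs))) mod 2 = 1)"
    using assms by (intro detP_eq det_mod det_div det_pow det_sub det_binlen det_suc det_const) auto
  then show ?thesis unfolding bitf_def detP_def by (rule det_ext) (simp add: odd_iff_mod_2_eq_one)
qed

lemma det_boolsplit:
  assumes "detP k P" "det k (F True)" "det k (F False)" "0 < k"
  shows "det k (\<lambda>xs. F (P xs) xs)"
proof -
  have "det k (\<lambda>xs. if P xs then F True xs else F False xs)" using assms by (intro det_if) auto
  then show ?thesis by (rule det_ext) auto
qed

lemma det_tab2mod:
  assumes "det k f" "det k g" "0 < k" "0 < m1" "0 < m2"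
  shows "det k (\<lambda>xs. T (f xs mod m1) (g xs mod m2))"
proof -
  have "det k (\<lambda>xs. if f xs mod m1 < m1 \<and> g xs mod m2 < m2 then T (f xs mod m1) (g xs mod m2) else 0)"
    using assms by (intro det_table2 det_mod det_const) auto
  then show ?thesis by (rule det_ext) (use assms in auto)
qed

lemma det_tab1mod:
  assumes "det k f" "0 < k" "0 < m1"
  shows "det k (\<lambda>xs. T (f xs mod m1))"
proof -
  have "det k (\<lambda>xs. if f xs mod m1 < m1 then T (f xs mod m1) else 0)"
    using assms by (intro det_table1 det_mod det_const) auto
  then show ?thesis by (rule det_ext) (use assms in auto)
qed

context enc
begin

lemma det_TQ: "detP k P \<Longrightarrow> det k f \<Longrightarrow> det k g \<Longrightarrow> 0 < k \<Longrightarrow> det k (\<lambda>xs. TQ (P xs) (f xs mod Q) (g xs mod B))"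
  by (rule det_boolsplit[where F="\<lambda>b xs. TQ b (f xs mod Q) (g xs mod B)"])
     (auto intro!: det_tab2mod simp: Q_pos B_gt1[THEN less_trans[OF zero_less_one]])
lemma det_TB: "detP k P \<Longrightarrow> det k f \<Longrightarrow> det k g \<Longrightarrow> 0 < k \<Longrightarrow> det k (\<lambda>xs. TB (P xs) (f xs mod Q) (g xs mod B))"
  by (rule det_boolsplit[where F="\<lambda>b xs. TB b (f xs mod Q) (g xs mod B)"])
     (auto intro!: det_tab2mod simp: Q_pos B_gt1[THEN less_trans[OF zero_less_one]])
lemma det_TM: "detP k P \<Longrightarrow> det k f \<Longrightarrow> det k g \<Longrightarrow> 0 < k \<Longrightarrow> det k (\<lambda>xs. TM (P xs) (f xs mod Q) (g xs mod B))"
  by (rule det_boolsplit[where F="\<lambda>b xs. TM b (f xs mod Q) (g xs mod B)"])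
     (auto intro!: det_tab2mod simp: Q_pos B_gt1[THEN less_trans[OF zero_less_one]])
lemma det_FIN: "det k f \<Longrightarrow> 0 < k \<Longrightarrow> det k (\<lambda>xs. FIN (f xs mod Q))"
  by (rule det_tab1mod) (auto simp: Q_pos)

lemma det_NS:
  assumes "det k fW" "detP k fb" "det k fn" "0 < k"
  shows "det k (\<lambda>xs. NS (fW xs) (fb xs) (fn xs))"
  unfolding NS_def pk_def dq_def da_def dl_def dr_def
  using assms
  by (intro det_if detP_eq detP_and det_add det_mult det_div det_mod det_const
        det_TQ det_TB det_TM det_FIN) auto

definition LEAFN :: "nat \<Rightarrow> nat \<Rightarrow> nat" where
  "LEAFN x y = prrec (pk (B ^ y) (cq (start M)) (IA x) 0 (IR x))
      (\<lambda>j r. NS (B ^ y) (bitf y j) r) (length (bin y))"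

lemma LEAFN_eq: "LEAFN x y = encO (B ^ y) (label M x (bin y))"
  unfolding LEAFN_def init_enc[symmetric] by (rule label_iter)

lemma det_IA: "det k f \<Longrightarrow> 0 < k \<Longrightarrow> det k (\<lambda>xs. IA (f xs))"
  unfolding IA_def
  by (intro det_if detP_eq det_binlen det_const det_boolsplit[where F="\<lambda>b xs. cs (bitsym M b)"] detP_bitf) auto

lemma det_IR: "det k f \<Longrightarrow> 0 < k \<Longrightarrow> det k (\<lambda>xs. IR (f xs))"
  unfolding IR_def
  by (intro det_sum' det_mult det_pow det_sub det_binlen det_const det_proj det_suc detP_bitf
        det_boolsplit[where F="\<lambda>b xs. cs (bitsym M b)"] det_weaken[where k=k]) auto

lemma det_LEAFN:
  assumes "det k fx" "det k fy" "0 < k"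
  shows "det k (\<lambda>xs. LEAFN (fx xs) (fy xs))"
  unfolding LEAFN_def
proof (rule det_iter'[where S="\<lambda>xs j r. NS (B ^ fy xs) (bitf (fy xs) j) r"])
  show "det k (\<lambda>xs. pk (B ^ fy xs) (cq (start M)) (IA (fx xs)) 0 (IR (fx xs)))"
    unfolding pk_def using assms by (intro det_add det_mult det_pow det_const det_IA det_IR) auto
  show "det (Suc (Suc k)) (\<lambda>ys. NS (B ^ fy (take k ys)) (bitf (fy (take k ys)) (ys ! k)) (ys ! Suc k))"
    using assms by (intro det_NS det_pow det_const detP_bitf det_proj det_weaken[where k=k]) auto
  show "det k (\<lambda>xs. length (bin (fy xs)))" using assms by (intro det_binlen)
qed

lemma leaf_LEAFN: "leaf M x y \<longleftrightarrow> (LEAFN x y mod 2 = 0 \<and> dr (B ^ y) (LEAFN x y) = 0 \<and> FIN (dq (LEAFN x y)) = 1)"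
  unfolding LEAFN_eq leaf_iff Let_def ..

lemma detP_leaf:
  assumes "det k fx" "det k fy" "0 < k"
  shows "detP k (\<lambda>xs. leaf M (fx xs) (fy xs))"
  unfolding leaf_LEAFN dr_def dq_def
  using assms by (intro detP_and detP_eq det_mod det_div det_pow det_LEAFN det_FIN det_const) auto

definition NN :: "nat \<Rightarrow> nat \<Rightarrow> nat" where
  "NN x y = 2 ^ length (bin y) - (\<Sum>k<y. if leaf M x k then 2 ^ (length (bin y) - length (bin k)) else 0)"

lemma det_NN:
  assumes "det k fx" "det k fy" "0 < k"
  shows "det k (\<lambda>xs. NN (fx xs) (fy xs))"
  unfolding NN_def
  using assms by (intro det_sub det_pow det_const det_binlen det_sum' det_if detP_leaf det_proj
     det_weaken[where k=k]) auto

definition HH :: "nat list \<Rightarrow> nat" where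
  "HH xs = (if leaf M (xs ! 0) (xs ! 1) \<and> ((2 ^ Suc (xs ! 2) - 1) div NN (xs ! 0) (xs ! 1)) mod 2 = 1 then 0 else 1)"

lemma det_HH: "det 3 HH"
  unfolding HH_def
  by (intro det_if detP_and detP_leaf detP_eq det_mod det_div det_sub det_pow det_NN det_proj det_const det_suc) auto

end


lemma bin_nonempty: "bin (Suc n) \<noteq> []" by simp

lemma bin_inj_aux: "bin a = bin b \<Longrightarrow> a = b"
proof (induction a arbitrary: b rule: less_induct)
  case (less a)
  show ?case
  proof (cases a)
    case 0
    then show ?thesis using less.prems by (cases b) auto
  next
    case (Suc n)
    then obtain m where b: "b = Suc m" using less.prems by (cases b) auto
    have "bin (n div 2) = bin (m div 2)" "odd n = odd m" using less.prems Suc b by auto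
    then have "n div 2 = m div 2" using less.IH Suc by auto
    moreover have "n mod 2 = m mod 2" using \<open>odd n = odd m\<close>
      by (cases "odd n") (auto simp: odd_iff_mod_2_eq_one even_iff_mod_2_eq_zero)
    ultimately have "n = m" using div_mult_mod_eq[of n 2] div_mult_mod_eq[of m 2] by linarith
    then show ?thesis using Suc b by simp
  qed
qed

lemma inj_bin: "inj bin" by (auto intro: injI bin_inj_aux)

lemma foldl_label_None:
  "foldl (\<lambda>oc i. case oc of None \<Rightarrow> None | Some C \<Rightarrow> if final_conf M C then None else Some (step M i C)) None bs = None"
  by (induction bs) auto

lemma label_after_final:
  assumes "label M x bs = Some C" "final_conf M C"
  shows "label M x (bs @ b # rest) = None"
  using assms unfolding label_def by (simp add: foldl_label_None)

lemma leaf_prefix: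
  assumes "leaf M x k" "leaf M x k'" "bin k' = bin k @ r"
  shows "r = []"
proof (rule ccontr)
  assume "r \<noteq> []"
  then obtain b rest where r: "r = b # rest" by (cases r) auto
  obtain C where "label M x (bin k) = Some C" "final_conf M C" using assms(1) by (auto simp: leaf_def)
  then have "label M x (bin k') = None" using label_after_final assms(3) r by simp
  then show False using assms(2) by (simp add: leaf_def)
qed

lemma kraft:
  "finite (A :: bool list set) \<Longrightarrow> (\<forall>u\<in>A. \<forall>v\<in>A. \<forall>r. v = u @ r \<longrightarrow> r = []) \<Longrightarrow> (\<forall>w\<in>A. length w \<le> n)
   \<Longrightarrow> (\<Sum>w\<in>A. (1/2::real) ^ length w) \<le> 1"
proof (induction n arbitrary: A)
  case 0
  then have "A \<subseteq> {[]}" by auto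
  then have "A = {} \<or> A = {[]}" by auto
  then show ?case by auto
next
  case (Suc n)
  show ?case
  proof (cases "[] \<in> A")
    case True
    have "v = []" if "v \<in> A" for v
      using Suc.prems(2)[rule_format, of "[]" v v] True that by simp
    then have "A = {[]}" using True by blast
    then show ?thesis by simp
  next
    case False
    define A0 where "A0 = {w. False # w \<in> A}"
    define A1 where "A1 = {w. True # w \<in> A}"
    have fin0: "finite A0" unfolding A0_def
      using finite_vimageI[OF Suc.prems(1), of "Cons False"] by (simp add: vimage_def)
    have fin1: "finite A1" unfolding A1_def
      using finite_vimageI[OF Suc.prems(1), of "Cons True"] by (simp add: vimage_def)
    have pf0: "\<forall>u\<in>A0. \<forall>v\<in>A0. \<forall>r. v = u @ r \<longrightarrow> r = []"
    proof (intro ballI allI impI)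
      fix u v r assume "u \<in> A0" "v \<in> A0" "v = u @ r"
      then show "r = []" using Suc.prems(2)[rule_format, of "False # u" "False # v" r] unfolding A0_def by simp
    qed
    have pf1: "\<forall>u\<in>A1. \<forall>v\<in>A1. \<forall>r. v = u @ r \<longrightarrow> r = []"
    proof (intro ballI allI impI)
      fix u v r assume "u \<in> A1" "v \<in> A1" "v = u @ r"
      then show "r = []" using Suc.prems(2)[rule_format, of "True # u" "True # v" r] unfolding A1_def by simp
    qed
    have l0: "\<forall>w\<in>A0. length w \<le> n" using Suc.prems(3) unfolding A0_def by fastforce
    have l1: "\<forall>w\<in>A1. length w \<le> n" using Suc.prems(3) unfolding A1_def by fastforce
    have A: "A = Cons False ` A0 \<union> Cons True ` A1"
    proof
      show "A \<subseteq> Cons False ` A0 \<union> Cons True ` A1"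
      proof
        fix w assume "w \<in> A"
        then obtain c w' where "w = c # w'" using False by (cases w) auto
        then show "w \<in> Cons False ` A0 \<union> Cons True ` A1" using \<open>w \<in> A\<close> unfolding A0_def A1_def
          by (cases c) auto
      qed
    qed (auto simp: A0_def A1_def)
    have "(\<Sum>w\<in>A. (1/2::real) ^ length w)
        = (\<Sum>w\<in>Cons False ` A0. (1/2::real) ^ length w) + (\<Sum>w\<in>Cons True ` A1. (1/2::real) ^ length w)"
      unfolding A by (rule sum.union_disjoint) (use fin0 fin1 in auto)
    also have "\<dots> = (\<Sum>w\<in>A0. (1/2::real) ^ Suc (length w)) + (\<Sum>w\<in>A1. (1/2::real) ^ Suc (length w))"
      by (simp add: sum.reindex del: power_Suc)
    also have "\<dots> = (1/2) * (\<Sum>w\<in>A0. (1/2::real) ^ length w) + (1/2) * (\<Sum>w\<in>A1. (1/2::real) ^ length w)"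
      by (simp add: sum_distrib_left)
    also have "\<dots> \<le> (1/2) * 1 + (1/2) * 1"
      using Suc.IH[OF fin0 pf0 l0] Suc.IH[OF fin1 pf1 l1] by (intro add_mono mult_left_mono) auto
    finally show ?thesis by simp
  qed
qed

lemma PT_eq: "PT y = (1/2) ^ length (bin y)"
  by (simp add: PT_def power_int_minus power_int_of_nat power_one_over inverse_eq_divide)

lemma PT_pos: "PT y > 0" by (simp add: PT_eq)

definition SS :: "('q, 's) ptm \<Rightarrow> nat \<Rightarrow> nat \<Rightarrow> real" where
  "SS M x y = (\<Sum>k<y. if leaf M x k then PT k else 0)"

lemma kraft_leaves:
  assumes "leaf M x y"
  shows "SS M x y + PT y \<le> 1"
proof -
  define L where "L = insert y {k\<in>{..<y}. leaf M x k}"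
  have finL: "finite L" unfolding L_def by auto
  have Lleaf: "k \<in> L \<Longrightarrow> leaf M x k" for k unfolding L_def using assms by auto
  have "SS M x y = (\<Sum>k\<in>{k\<in>{..<y}. leaf M x k}. PT k)"
    unfolding SS_def by (rule sum.inter_filter[symmetric]) simp
  then have "SS M x y + PT y = (\<Sum>k\<in>L. PT k)" unfolding L_def by simp
  also have "\<dots> = (\<Sum>w\<in>bin ` L. (1/2::real) ^ length w)"
    using inj_on_subset[OF inj_bin, of L] by (simp add: sum.reindex PT_eq)
  also have "\<dots> \<le> 1"
  proof (rule kraft)
    show "finite (bin ` L)" using finL by simp
    show "\<forall>u\<in>bin ` L. \<forall>v\<in>bin ` L. \<forall>r. v = u @ r \<longrightarrow> r = []"
    proof (intro ballI allI impI)
      fix u v r assume u: "u \<in> bin ` L" and v: "v \<in> bin ` L" and e: "v = u @ r"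
      from u obtain k where k: "k \<in> L" "u = bin k" by auto
      from v obtain k' where k': "k' \<in> L" "v = bin k'" by auto
      show "r = []" using leaf_prefix[OF Lleaf[OF k(1)] Lleaf[OF k'(1)]] e k k' by simp
    qed
    show "\<forall>w\<in>bin ` L. length w \<le> Max (length ` bin ` L)" using finL by simp
  qed
  finally show ?thesis .
qed

lemma PTprod_SS: "PTprod M x y = 1 - SS M x y"
proof (induction y)
  case 0 then show ?case by (simp add: SS_def)
next
  case (Suc y)
  show ?case
  proof (cases "leaf M x y")
    case True
    have "PTprod M x y \<ge> PT y" using kraft_leaves[OF True] Suc by simp
    then have "PTprod M x y \<noteq> 0" using PT_pos[of y] by linarith
    then have "PTprod M x (Suc y) = PTprod M x y - PT y" using True by (simp add: right_diff_distrib)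
    then show ?thesis using Suc True by (simp add: SS_def)
  next
    case False
    then show ?thesis using Suc by (simp add: SS_def)
  qed
qed

lemma PTprod_ge: "leaf M x y \<Longrightarrow> PTprod M x y \<ge> PT y"
  using kraft_leaves[of M x y] PTprod_SS[of M x y] by simp

lemma part1: "CF M x = mu_pf (\<lambda>xs. PTC M (xs ! 0) (xs ! 1)) [x]"
proof
  fix y
  have sum1: "(\<Sum>\<^sub>\<infinity>k\<in>{0<..}. PTC M x z k) = PT1 M x z" for z
    by (subst infsum_cong_neutral[where T="{1}" and g="PTC M x z"]) (auto simp: PTC_def)
  have "mu_pf (\<lambda>xs. PTC M (xs ! 0) (xs ! 1)) [x] y = PT0 M x y * (\<Prod>z<y. PT1 M x z)"
    unfolding mu_pf_def by (simp add: sum1 PTC_def)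
  also have "\<dots> = PT0 M x y * PTprod M x y" by (simp add: PTprod_eq)
  also have "\<dots> = CF M x y"
  proof (cases "leaf M x y")
    case True
    have "PTprod M x y \<noteq> 0" using PTprod_ge[OF True] PT_pos[of y] by linarith
    then show ?thesis using True by (simp add: PT0_def CF_def)
  next
    case False then show ?thesis by (simp add: PT0_def CF_def)
  qed
  finally show "CF M x y = mu_pf (\<lambda>xs. PTC M (xs ! 0) (xs ! 1)) [x] y" ..
qed


definition mm :: "nat \<Rightarrow> nat \<Rightarrow> nat" where "mm N j = (2 ^ j - 1) div N"

lemma mm_Suc: "mm N (Suc j) = 2 * mm N j + mm N (Suc j) mod 2"
proof -
  have o: "(1::nat) \<le> 2 ^ j" by simp
  have e: "(2::nat) ^ Suc j - 1 = 2 * (2 ^ j - 1) + 1"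
    using o by (simp only: power_Suc)
  have "mm N (Suc j) div 2 = mm N j"
  proof -
    have "(2 * (2 ^ j - 1) + 1) div N div 2 = (2 * (2 ^ j - 1) + 1) div 2 div (N::nat)"
      by (metis div_mult2_eq mult.commute)
    then show ?thesis unfolding mm_def e by simp
  qed
  then show ?thesis using div_mult_mod_eq[of "mm N (Suc j)" 2] by linarith
qed

lemma partial_mm: "(\<Sum>t<n. real (mm N (Suc t) mod 2) * (1/2) ^ Suc t) = real (mm N n) / 2 ^ n"
proof (induction n)
  case 0 then show ?case by (simp add: mm_def)
next
  case (Suc n)
  have "real (mm N (Suc n)) = real (2 * mm N n + mm N (Suc n) mod 2)"
    using mm_Suc[of N n] by (rule arg_cong)
  then have "real (mm N (Suc n)) = 2 * real (mm N n) + real (mm N (Suc n) mod 2)" by simp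
  then show ?case using Suc by (simp add: field_simps)
qed

lemma mm_bounds:
  assumes "N \<ge> 1"
  shows "real (mm N n) \<le> (2 ^ n - 1) / N" "(2 ^ n - 1) / N - 1 < real (mm N n)"
proof -
  have p: "real (2 ^ n - 1 :: nat) = 2 ^ n - 1" using one_le_power[of "2::nat" n] by (simp add: of_nat_diff)
  have a0: "mm N n * N \<le> 2 ^ n - 1" unfolding mm_def by (rule div_times_less_eq_dividend)
  then have "real (mm N n * N) \<le> real (2 ^ n - 1 :: nat)" by (simp only: of_nat_le_iff)
  then have a: "real (mm N n) * N \<le> 2 ^ n - 1" using p by simp
  have b: "2 ^ n - 1 < (real (mm N n) + 1) * N"
  proof -
    have e1: "2 ^ n - 1 = mm N n * N + (2 ^ n - 1) mod N" unfolding mm_def by simp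
    have e2: "(2 ^ n - 1) mod N < N" using assms by simp
    have e3: "(mm N n + 1) * N = mm N n * N + N" by simp
    have "2 ^ n - 1 < (mm N n + 1) * N" using e1 e2 e3 by linarith
    then have "real (2 ^ n - 1 :: nat) < real ((mm N n + 1) * N)" by (simp only: of_nat_less_iff)
    then show ?thesis using p by (simp add: algebra_simps)
  qed
  show "real (mm N n) \<le> (2 ^ n - 1) / N" using a assms by (simp add: field_simps)
  show "(2 ^ n - 1) / N - 1 < real (mm N n)" using b assms by (simp add: field_simps)
qed

lemma binexp_sums:
  assumes "N \<ge> 1"
  shows "(\<lambda>t. real (mm N (Suc t) mod 2) * (1/2) ^ Suc t) sums (1 / N)"
  unfolding sums_def partial_mm
proof (rule tendsto_sandwich[where f="\<lambda>n. 1/N - (1/N) * (1/2)^n - (1/2)^n" and h="\<lambda>n. 1/N - (1/N) * (1/2)^n"])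
  have z: "(\<lambda>n. (1/2::real)^n) \<longlonglongrightarrow> 0" by (rule LIMSEQ_power_zero) simp
  have "(\<lambda>n. 1/N - (1/N) * (1/2)^n - (1/2)^n) \<longlonglongrightarrow> 1/N - (1/N) * 0 - 0"
    by (intro tendsto_diff tendsto_mult tendsto_const z)
  then show "(\<lambda>n. 1/N - (1/N) * (1/2)^n - (1/2)^n) \<longlonglongrightarrow> 1 / real N" by simp
  have "(\<lambda>n. 1/N - (1/N) * (1/2)^n) \<longlonglongrightarrow> 1/N - (1/N) * 0"
    by (intro tendsto_diff tendsto_mult tendsto_const z)
  then show "(\<lambda>n. 1/N - (1/N) * (1/2)^n) \<longlonglongrightarrow> 1 / real N" by simp
  have pos: "(0::real) < 2 ^ n" for n :: nat by simp
  show "\<forall>\<^sub>F n in sequentially. 1/N - (1/N) * (1/2)^n - (1/2)^n \<le> real (mm N n) / 2 ^ n"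
  proof (intro always_eventually allI)
    fix n
    have "(2 ^ n - 1) / N - 1 < real (mm N n)" by (rule mm_bounds(2)[OF assms])
    then have "((2 ^ n - 1) / N - 1) / 2 ^ n \<le> real (mm N n) / 2 ^ n"
      by (intro divide_right_mono) auto
    moreover have "((2 ^ n - 1) / N - 1) / 2 ^ n = 1/N - (1/N) * (1/2)^n - (1/2)^n"
      using assms by (simp add: field_simps power_one_over)
    ultimately show "1/N - (1/N) * (1/2)^n - (1/2)^n \<le> real (mm N n) / 2 ^ n" by simp
  qed
  show "\<forall>\<^sub>F n in sequentially. real (mm N n) / 2 ^ n \<le> 1/N - (1/N) * (1/2)^n"
  proof (intro always_eventually allI)
    fix n
    have "real (mm N n) \<le> (2 ^ n - 1) / N" by (rule mm_bounds(1)[OF assms])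
    then have "real (mm N n) / 2 ^ n \<le> ((2 ^ n - 1) / N) / 2 ^ n"
      by (intro divide_right_mono) auto
    moreover have "((2 ^ n - 1) / N) / 2 ^ n = 1/N - (1/N) * (1/2)^n"
      using assms by (simp add: field_simps power_one_over)
    ultimately show "real (mm N n) / 2 ^ n \<le> 1/N - (1/N) * (1/2)^n" by simp
  qed
qed

lemma geom_half_sums: "(\<lambda>t. (1/2::real) ^ Suc t) sums 1"
proof -
  have "(\<lambda>t. (1/2::real) * (1/2) ^ t) sums ((1/2) * (1 / (1 - 1/2)))"
    by (intro sums_mult geometric_sums) simp
  then show ?thesis by simp
qed


definition Coin :: "nat list \<Rightarrow> nat \<Rightarrow> real" where
  "Coin xs k = (if k = 0 \<or> k = 1 then 1/2 else 0)"

lemma PR_Coin: "PR 3 Coin"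
proof -
  have d: "PR 3 (\<lambda>xs. dm 0)" using det_const0[of 3] unfolding det_def by simp
  have "PR 3 (comp_pf (\<lambda>xs y. if y = hd xs \<or> y = hd xs + 1 then 1 / 2 else 0) [\<lambda>xs. dm 0])"
    by (rule PR.comp) (use PR.rand d in auto)
  then show ?thesis
  proof (rule PR.ext, intro allI impI)
    fix xs :: "nat list"
    show "Coin xs = comp_pf (\<lambda>xs y. if y = hd xs \<or> y = hd xs + 1 then 1 / 2 else 0) [\<lambda>xs. dm 0] xs"
    proof
      fix y
      have "comp_pf (\<lambda>xs y. if y = hd xs \<or> y = hd xs + 1 then 1 / 2 else 0) [\<lambda>xs. dm 0] xs y
          = (\<Sum>\<^sub>\<infinity>zs\<in>{zs. length zs = 1}. (if y = hd zs \<or> y = hd zs + 1 then 1 / 2 else 0) * dm 0 (zs ! 0))"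
        unfolding comp_pf_def by simp
      also have "\<dots> = (if y = hd [0] \<or> y = hd [0] + 1 then 1 / 2 else 0) * dm 0 ([0::nat] ! 0)"
      proof (rule infsum_point)
        fix zs :: "nat list" assume "zs \<in> {zs. length zs = 1}" "zs \<noteq> [0]"
        then obtain a where "zs = [a]" "a \<noteq> 0" by (cases zs) auto
        then show "(if y = hd zs \<or> y = hd zs + 1 then 1 / 2 else 0) * dm 0 (zs ! 0) = 0"
          by (simp add: dm_def)
      qed simp
      finally show "Coin xs y = comp_pf (\<lambda>xs y. if y = hd xs \<or> y = hd xs + 1 then 1 / 2 else 0) [\<lambda>xs. dm 0] xs y"
        by (simp add: Coin_def dm_def)
    qed
  qed
qed

lemma PR_Geo: "PR 2 (mu_pf Coin)"
  using PR.mini[of 2 Coin] PR_Coin by simp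

lemma Geo_val: "mu_pf Coin xs t = (1/2) ^ Suc t"
proof -
  have h: "(\<Sum>\<^sub>\<infinity>k\<in>{0<..}. Coin ys k) = 1/2" for ys
    by (subst infsum_point[where a=1]) (auto simp: Coin_def)
  show ?thesis by (simp add: mu_pf_def h Coin_def[of _ 0])
qed

context enc
begin

lemma NN_props:
  assumes "leaf M x y"
  shows "real (NN x y) = 2 ^ length (bin y) * PTprod M x y" "NN x y \<ge> 1" "PT0 M x y = 1 / real (NN x y)"
proof -
  define L where "L = length (bin y)"
  define Sn where "Sn = (\<Sum>k<y. if leaf M x k then (2::nat) ^ (L - length (bin k)) else 0)"
  have "real Sn = (\<Sum>k<y. if leaf M x k then 2 ^ L * PT k else 0)"
    unfolding Sn_def of_nat_sum
  proof (rule sum.cong)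
    fix k assume "k \<in> {..<y}"
    then have le: "length (bin k) \<le> L" unfolding L_def by (intro bin_len_mono) simp
    have "(2::real) ^ (L - length (bin k)) = 2 ^ L / 2 ^ length (bin k)"
      using le by (simp add: power_diff)
    then show "real (if leaf M x k then 2 ^ (L - length (bin k)) else 0) = (if leaf M x k then 2 ^ L * PT k else 0)"
      by (simp add: PT_eq power_one_over)
  qed simp
  also have "\<dots> = 2 ^ L * SS M x y" unfolding SS_def sum_distrib_left by (rule sum.cong) auto
  finally have Sn: "real Sn = 2 ^ L * SS M x y" .
  have "SS M x y + PT y \<le> 1" by (rule kraft_leaves[OF assms])
  then have "2 ^ L * SS M x y + 1 \<le> 2 ^ L"
    using mult_left_mono[of "SS M x y + PT y" 1 "2 ^ L"] by (simp add: PT_eq L_def distrib_left power_one_over)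
  then have "real Sn + 1 \<le> real ((2::nat) ^ L)" using Sn by simp
  then have le: "Sn + 1 \<le> 2 ^ L" by linarith
  have NN: "NN x y = 2 ^ L - Sn" unfolding NN_def L_def Sn_def by simp
  have r: "real (NN x y) = 2 ^ L - real Sn" using le unfolding NN by (simp add: of_nat_diff)
  then show r': "real (NN x y) = 2 ^ length (bin y) * PTprod M x y"
    using Sn by (simp add: PTprod_SS L_def right_diff_distrib)
  show "NN x y \<ge> 1" using le NN by simp
  have pp: "PTprod M x y \<noteq> 0" using PTprod_ge[OF assms] PT_pos[of y] by linarith
  show "PT0 M x y = 1 / real (NN x y)"
    using pp by (simp add: r' PT0_def assms PT_eq power_one_over field_simps)
qed

definition FF :: "nat list \<Rightarrow> nat \<Rightarrow> real" where
  "FF = comp_pf (\<lambda>zs. dm (HH zs)) [\<lambda>xs. dm (xs ! 0), \<lambda>xs. dm (xs ! 1), mu_pf Coin]"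

lemma PR_FF: "PR 2 FF"
  unfolding FF_def
proof (rule PR.comp)
  show "PR (length [\<lambda>xs. dm (xs ! 0), \<lambda>xs. dm (xs ! 1), mu_pf Coin]) (\<lambda>zs. dm (HH zs))"
    using det_HH unfolding det_def by (simp add: eval_nat_numeral)
  have "PR 2 (\<lambda>xs. dm (xs ! 0))" "PR 2 (\<lambda>xs. dm (xs ! 1))"
    using det_proj[of 0 2] det_proj[of 1 2] unfolding det_def by auto
  then show "\<forall>g\<in>set [\<lambda>xs. dm (xs ! 0), \<lambda>xs. dm (xs ! 1), mu_pf Coin]. PR 2 g"
    using PR_Geo by auto
qed

lemma FF_val: "FF [x, y] w = (\<Sum>\<^sub>\<infinity>t. dm (HH [x, y, t]) w * (1/2) ^ Suc t)"
proof -
  let ?f = "\<lambda>zs. dm (HH zs) w * (\<Prod>i<length [\<lambda>xs. dm (xs ! 0), \<lambda>xs. dm (xs ! 1), mu_pf Coin].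
                ([\<lambda>xs. dm (xs ! 0), \<lambda>xs. dm (xs ! 1), mu_pf Coin] ! i) [x, y] (zs ! i))"
  have p: "?f zs = dm (HH zs) w * (dm x (zs ! 0) * dm y (zs ! 1) * (1/2) ^ Suc (zs ! 2))" for zs
    by (simp add: numeral_3_eq_3 numeral_2_eq_2 lessThan_Suc Geo_val)
  have "FF [x, y] w = infsum ?f {zs. length zs = length [\<lambda>xs. dm (xs ! 0), \<lambda>xs. dm (xs ! 1), mu_pf Coin]}"
    unfolding FF_def comp_pf_def by (rule refl)
  also have "\<dots> = infsum ?f (range (\<lambda>t. [x, y, t]))"
  proof (rule infsum_cong_neutral)
    fix zs assume "zs \<in> {zs. length zs = length [\<lambda>xs. dm (xs ! 0), \<lambda>xs. dm (xs ! 1), mu_pf Coin]} - range (\<lambda>t. [x, y, t])"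
    then have "length zs = 3" "\<forall>t. zs \<noteq> [x, y, t]" by auto
    then obtain a b c where zs: "zs = [a, b, c]"
      by (cases zs; cases "tl zs"; cases "tl (tl zs)") (auto simp: numeral_3_eq_3)
    then have "a \<noteq> x \<or> b \<noteq> y" using \<open>\<forall>t. zs \<noteq> [x, y, t]\<close> by auto
    then show "?f zs = 0" unfolding p zs by (auto simp: dm_def)
  qed auto
  also have "\<dots> = infsum (?f \<circ> (\<lambda>t. [x, y, t])) UNIV"
    by (rule infsum_reindex) (auto simp: inj_on_def)
  also have "\<dots> = (\<Sum>\<^sub>\<infinity>t. dm (HH [x, y, t]) w * (1/2) ^ Suc t)"
    by (rule infsum_cong) (simp add: p dm_def Geo_val)
  finally show ?thesis .
qed

lemma HH_val: "HH [x, y, t] = (if leaf M x y \<and> mm (NN x y) (Suc t) mod 2 = 1 then 0 else 1)"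
  by (simp add: HH_def mm_def)

lemma mod2_real: "real (m mod 2) = (if m mod 2 = 1 then 1 else 0)"
  by (cases "m mod 2 = 1") (auto simp: mod2_eq_if split: if_splits)

lemma FF_PTC: "FF [x, y] = PTC M x y"
proof
  fix w
  have g: "((\<lambda>t. (1/2::real) ^ Suc t) has_sum 1) UNIV"
    by (rule sums_nonneg_imp_has_sum[OF geom_half_sums]) simp
  show "FF [x, y] w = PTC M x y w"
  proof (cases "w \<ge> 2")
    case True
    then have "\<And>t. dm (HH [x, y, t]) w = 0" by (simp add: HH_val dm_def)
    then show ?thesis using True by (simp add: FF_val PTC_def)
  next
    case False
    show ?thesis
    proof (cases "leaf M x y")
      case lf: False
      have "\<And>t. HH [x, y, t] = 1" by (simp add: HH_val lf)
      then show ?thesis using False g infsumI[OF g]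
        by (cases "w = 0") (auto simp: FF_val PTC_def dm_def PT0_def PT1_def lf)
    next
      case lf: True
      define N where "N = NN x y"
      have N1: "N \<ge> 1" using NN_props(2)[OF lf] by (simp add: N_def)
      have s0: "((\<lambda>t. real (mm N (Suc t) mod 2) * (1/2) ^ Suc t) has_sum (1 / N)) UNIV"
        by (rule sums_nonneg_imp_has_sum[OF binexp_sums[OF N1]]) simp
      have s1: "((\<lambda>t. (1 - real (mm N (Suc t) mod 2)) * (1/2) ^ Suc t) has_sum (1 - 1 / N)) UNIV"
      proof (rule sums_nonneg_imp_has_sum)
        have "(\<lambda>t. (1/2::real) ^ Suc t - real (mm N (Suc t) mod 2) * (1/2) ^ Suc t) sums (1 - 1 / N)"
          by (intro sums_diff geom_half_sums binexp_sums[OF N1])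
        then show "(\<lambda>t. (1 - real (mm N (Suc t) mod 2)) * (1/2) ^ Suc t) sums (1 - 1 / N)"
          by (simp only: left_diff_distrib mult_1)
        show "0 \<le> (1 - real (mm N (Suc t) mod 2)) * (1/2) ^ Suc t" for t
          by (simp add: mod2_real)
      qed
      have PT0: "PT0 M x y = 1 / N" using NN_props(3)[OF lf] by (simp add: N_def)
      show ?thesis
      proof (cases "w = 0")
        case True
        have "FF [x, y] w = (\<Sum>\<^sub>\<infinity>t. real (mm N (Suc t) mod 2) * (1/2) ^ Suc t)"
          unfolding FF_val by (rule infsum_cong) (simp add: HH_val lf True dm_def mod2_real N_def)
        then show ?thesis using infsumI[OF s0] True PT0 by (simp add: PTC_def)
      next
        case w0: False
        then have w1: "w = 1" using False by simp
        have "FF [x, y] w = (\<Sum>\<^sub>\<infinity>t. (1 - real (mm N (Suc t) mod 2)) * (1/2) ^ Suc t)"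
          unfolding FF_val by (rule infsum_cong) (simp add: HH_val lf w1 dm_def mod2_real N_def)
        then show ?thesis using infsumI[OF s1] w1 PT0 by (simp add: PTC_def PT1_def lf)
      qed
    qed
  qed
qed

lemma PR_PTC: "PR 2 (\<lambda>xs. PTC M (xs ! 0) (xs ! 1))"
proof (rule PR.ext[OF PR_FF], intro allI impI)
  fix xs :: "nat list" assume "length xs = 2"
  then obtain x y where "xs = [x, y]"
    by (cases xs; cases "tl xs") (auto simp: numeral_2_eq_2)
  then show "PTC M (xs ! 0) (xs ! 1) = FF xs" by (simp add: FF_PTC)
qed

lemma final: "CF M = (\<lambda>x. mu_pf (\<lambda>xs. PTC M (xs ! 0) (xs ! 1)) [x]) \<and> PR 1 (\<lambda>xs. CF M (hd xs))"
proof
  show e: "CF M = (\<lambda>x. mu_pf (\<lambda>xs. PTC M (xs ! 0) (xs ! 1)) [x])"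
    by (rule HOL.ext) (rule part1)
  have "PR (1 + 1) (\<lambda>xs. PTC M (xs ! 0) (xs ! 1))" using PR_PTC by (simp only: one_add_one)
  from PR.mini[OF this] have "PR 1 (mu_pf (\<lambda>xs. PTC M (xs ! 0) (xs ! 1)))" .
  then show "PR 1 (\<lambda>xs. CF M (hd xs))"
  proof (rule PR.ext, intro allI impI)
    fix xs :: "nat list" assume "length xs = 1"
    then obtain x where "xs = [x]" by (cases xs) auto
    then show "CF M (hd xs) = mu_pf (\<lambda>xs. PTC M (xs ! 0) (xs ! 1)) xs" by (simp add: part1)
  qed
qed

end

theorem mainTheorem11:
  fixes M :: "('q::finite, 's::finite) ptm"
  assumes "is_ptm M"
  shows "CF M = (\<lambda>x. mu_pf (\<lambda>xs. PTC M (xs ! 0) (xs ! 1)) [x])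
         \<and> PR 1 (\<lambda>xs. CF M (hd xs))"
proof -
  obtain f :: "'q \<Rightarrow> nat" and n where f: "f ` UNIV = {i. i < n}" "inj_on f UNIV"
    using finite_imp_inj_to_nat_seg[of "UNIV :: 'q set"] by auto
  obtain g :: "'s \<Rightarrow> nat" and m where g: "g ` UNIV = {i. i < m}" "inj_on g UNIV"
    using finite_imp_inj_to_nat_seg[of "UNIV :: 's set"] by auto
  interpret enc M f "\<lambda>a. Suc (g a)" n "Suc m"
  proof
    show "inj f" using f(2) .
    show "f q < n" for q using f(1) by blast
    show "inj (\<lambda>a. Suc (g a))" using g(2) by (simp add: inj_on_def)
    show "0 < Suc (g a)" for a by simp
    show "Suc (g a) < Suc m" for a using g(1) by blast
  qed
  show ?thesis by (rule final)
qed

end
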